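(* For $\beta>0$ consider the $(\beta,S)$-coalescent and let $\lambda_n$ denote its total coalescence rate when there are $n$ blocks. If $\beta\in(0,1)$, $$\lim_{n\to\infty}n^{2(\beta-1)}\lambda_n=\frac{2^{\beta-1}\Gamma(\beta)}{1-\beta}.$$ If $\beta=1$, $$\lim_{n\to\infty}\frac{\lambda_n}{\log n}=2.$$
   Context: For $\beta>0$, the $(\beta,S)$-coalescent is the exchangeable coalescent (partition-valued Markov process) described as follows: whenever there are $b$ blocks, for each $k\in\mathbb{N}$, at rate $k^{-\beta}$ all current blocks are thrown independently and uniformly at random into $k$ boxes and all blocks in the same box merge (there is no Kingman/pairwise component). The total coalescence rate $\lambda_n$ is the total rate at which an event changing the partition occurs when there are $n$ blocks; equivalently $\lambda_n=\sum_{k\ge1}k^{-\beta}\,\mathbb{P}(\mathcal C^k_n)$, where $\mathcal C^k_n$ is the event that, when $n$ balls are thrown independently and uniformly into $k$ boxes, at least two balls land in the same box. *)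

theory Defs
  imports "HOL-Analysis.Analysis" "HOL-Library.FuncSet"
begin

text \<open>Probability of the event C^k_n: throwing n balls independently and uniformly
  into k boxes, at least two balls land in the same box. The sample space is the
  set of all maps from the n balls to the k boxes, with uniform measure.\<close>
definition coll_prob :: "nat \<Rightarrow> nat \<Rightarrow> real" where
  "coll_prob n k =
     real (card {f \<in> {..<n} \<rightarrow>\<^sub>E {..<k}. \<not> inj_on f {..<n}})
     / real (card ({..<n} \<rightarrow>\<^sub>E ({..<k}::nat set)))"

text \<open>Total coalescence rate of the (beta,S)-coalescent with n blocks:
  lambda_n = sum over k >= 1 of k^(-beta) P(C^k_n).\<close>
definition coal_rate :: "real \<Rightarrow> nat \<Rightarrow> real" where
  "coal_rate \<beta> n = (\<Sum>k. real (Suc k) powr (-\<beta>) * coll_prob n (Suc k))"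

end

theory Submission
  imports Defs "HOL-Real_Asymp.Real_Asymp"
begin


definition qprod :: "nat \<Rightarrow> nat \<Rightarrow> real" where
  "qprod n k = (\<Prod>i<n. real (k - i) / real k)"

lemma coll_prob_eq:
  assumes "k \<ge> 1"
  shows "coll_prob n k = 1 - qprod n k"
proof -
  let ?A = "{..<n} \<rightarrow>\<^sub>E {..<k}"
  have fin: "finite ?A" by (simp add: finite_PiE)
  have cA: "card ?A = k ^ n" by (simp add: card_funcsetE)
  have cI: "card {f \<in> ?A. inj_on f {..<n}} = (\<Prod>i<n. k - i)"
    using card_inj_on_subset_funcset[of "{..<n}" "{..<k}" "{..<n}"]
    by (simp add: atLeast0LessThan)
  have split: "{f \<in> ?A. \<not> inj_on f {..<n}} = ?A - {f \<in> ?A. inj_on f {..<n}}" by auto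
  have cN: "card {f \<in> ?A. \<not> inj_on f {..<n}} = k ^ n - (\<Prod>i<n. k - i)"
    unfolding split using fin cA cI by (subst card_Diff_subset) auto
  have le: "(\<Prod>i<n. k - i) \<le> k ^ n"
    using cI cA fin by (metis (no_types, lifting) card_mono mem_Collect_eq subsetI)
  have kpos: "real k > 0" using assms by simp
  have "coll_prob n k = (real (k ^ n) - real (\<Prod>i<n. k - i)) / real (k ^ n)"
    unfolding coll_prob_def cN cA using le by (simp add: of_nat_diff)
  also have "\<dots> = 1 - real (\<Prod>i<n. k - i) / real (k ^ n)"
    using kpos by (simp add: field_simps)
  also have "real (\<Prod>i<n. k - i) / real (k ^ n) = qprod n k"
    unfolding qprod_def by (simp add: prod_dividef)
  finally show ?thesis .
qed



definition mm :: "nat \<Rightarrow> real" where "mm n = real n * (real n - 1) / 2"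

lemma sum_real_lessThan: "(\<Sum>i<n. real i) = mm n"
  unfolding mm_def by (induction n) (auto simp: field_simps)

lemma qprod_factor_nonneg: "0 \<le> real (k - i) / real k" by simp

lemma qprod_factor_le1: "real (k - i) / real k \<le> 1"
  by (cases "k = 0") (auto simp: divide_le_eq_1)

lemma qprod_nonneg: "0 \<le> qprod n k"
  unfolding qprod_def by (intro prod_nonneg) auto

lemma qprod_le1: "qprod n k \<le> 1"
  unfolding qprod_def by (intro prod_le_1) (auto simp: qprod_factor_le1)

lemma qprod_upper:
  assumes "k \<ge> 1"
  shows "qprod n k \<le> exp (- mm n / real k)"
proof -
  have "qprod n k \<le> (\<Prod>i<n. exp (- real i / real k))"
    unfolding qprod_def
  proof (intro prod_mono conjI)
    fix i assume "i \<in> {..<n}"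
    show "0 \<le> real (k - i) / real k" by simp
    show "real (k - i) / real k \<le> exp (- real i / real k)"
    proof (cases "i \<le> k")
      case True
      have "real (k - i) / real k = 1 + (- real i / real k)"
        using True assms by (simp add: of_nat_diff field_simps)
      also have "\<dots> \<le> exp (- real i / real k)" by (rule exp_ge_add_one_self)
      finally show ?thesis .
    next
      case False then show ?thesis by simp
    qed
  qed
  also have "\<dots> = exp (\<Sum>i<n. - real i / real k)" by (simp add: exp_sum)
  also have "(\<Sum>i<n. - real i / real k) = - mm n / real k"
    by (simp add: sum_negf sum_divide_distrib[symmetric] sum_real_lessThan)
  finally show ?thesis .
qed

lemma qprod_lower:
  assumes "k \<ge> n" "k \<ge> 1"
  shows "exp (- mm n / real (k - n + 1)) \<le> qprod n k"
proof -
  have "exp (- mm n / real (k - n + 1)) = exp (\<Sum>i<n. - real i / real (k - n + 1))"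
    by (simp add: sum_negf sum_divide_distrib[symmetric] sum_real_lessThan)
  also have "\<dots> = (\<Prod>i<n. exp (- real i / real (k - n + 1)))" by (simp add: exp_sum)
  also have "\<dots> \<le> qprod n k"
    unfolding qprod_def
  proof (intro prod_mono conjI)
    fix i assume i: "i \<in> {..<n}"
    show "0 \<le> exp (- real i / real (k - n + 1))" by simp
    have ik: "i < k" using i assms by auto
    have kn: "real (k - n + 1) \<le> real (k - i)" using i assms by auto
    have pos: "real (k - n + 1) > 0" by simp
    have "exp (- real i / real (k - n + 1)) \<le> exp (- real i / real (k - i))"
      using kn pos by (auto intro!: divide_left_mono mult_pos_pos)
    also have "\<dots> = inverse (exp (real i / real (k - i)))"
      by (simp add: exp_minus)
    also have "\<dots> \<le> inverse (1 + real i / real (k - i))"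
      using ik by (intro le_imp_inverse_le exp_ge_add_one_self) (auto intro: add_pos_nonneg)
    also have "1 + real i / real (k - i) = real k / real (k - i)"
      using ik by (simp add: of_nat_diff field_simps)
    also have "inverse (real k / real (k - i)) = real (k - i) / real k" by simp
    finally show "exp (- real i / real (k - n + 1)) \<le> real (k - i) / real k" .
  qed
  finally show ?thesis .
qed

lemma qprod_weierstrass:
  assumes "k \<ge> 1"
  shows "1 - mm n / real k \<le> qprod n k"
proof -
  have "1 - (\<Sum>i<n. real i / real k) \<le> (\<Prod>i<n. real (k - i) / real k)"
  proof (induction n)
    case 0 then show ?case by simp
  next
    case (Suc n)
    let ?P = "(\<Prod>i<n. real (k - i) / real k)"
    have P0: "0 \<le> ?P" by (intro prod_nonneg) auto
    have P1: "?P \<le> 1" by (intro prod_le_1) (auto simp: qprod_factor_le1)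
    have a: "1 - real n / real k \<le> real (k - n) / real k"
      using assms by (cases "n \<le> k") (auto simp: of_nat_diff field_simps)
    have "?P * (1 - real n / real k) \<le> ?P * (real (k - n) / real k)"
      using P0 a by (intro mult_left_mono)
    moreover have "?P - real n / real k \<le> ?P * (1 - real n / real k)"
      proof -
      have "?P * (real n / real k) \<le> real n / real k"
        using P0 P1 by (intro mult_left_le_one_le) auto
      then show ?thesis by (simp add: algebra_simps)
    qed
    ultimately show ?case using Suc by simp
  qed
  also have "(\<Sum>i<n. real i / real k) = mm n / real k"
    by (simp add: sum_divide_distrib[symmetric] sum_real_lessThan)
  finally show ?thesis unfolding qprod_def .
qed



definition Gs :: "real \<Rightarrow> real \<Rightarrow> real" where
  "Gs \<beta> a = (\<Sum>k. real (Suc k) powr (-\<beta>) * (1 - exp (- a / real (Suc k))))"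

lemma summable_powr_Suc: "s < -1 \<Longrightarrow> summable (\<lambda>k. real (Suc k) powr s)"
  using summable_real_powr_iff[of s] summable_Suc_iff[of "\<lambda>n. real n powr s"] by simp

lemma one_minus_exp_le: "x \<ge> 0 \<Longrightarrow> 1 - exp (-x) \<le> (x::real)"
  using exp_ge_add_one_self[of "-x"] by simp

lemma one_minus_exp_nonneg: "x \<ge> 0 \<Longrightarrow> 0 \<le> 1 - exp (-x::real)"
  by simp

lemma powr_Suc_div: "real (Suc k) powr (-\<beta>) * (a / real (Suc k)) = a * real (Suc k) powr (-\<beta> - 1)"
  by (simp add: powr_diff powr_minus field_simps)

lemma Gs_summable:
  assumes "\<beta> > 0" "a \<ge> 0"
  shows "summable (\<lambda>k. real (Suc k) powr (-\<beta>) * (1 - exp (- a / real (Suc k))))"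
proof (rule summable_comparison_test')
  show "summable (\<lambda>k. a * real (Suc k) powr (-\<beta> - 1))"
    using assms by (intro summable_mult summable_powr_Suc) auto
  fix k
  have "1 - exp (- a / real (Suc k)) \<le> a / real (Suc k)"
    using one_minus_exp_le[of "a / real (Suc k)"] assms by simp
  moreover have "0 \<le> 1 - exp (- a / real (Suc k))" using assms by simp
  ultimately have "real (Suc k) powr (-\<beta>) * (1 - exp (- a / real (Suc k))) \<le> real (Suc k) powr (-\<beta>) * (a / real (Suc k))"
    by (intro mult_left_mono) auto
  then show "norm (real (Suc k) powr (-\<beta>) * (1 - exp (- a / real (Suc k)))) \<le> a * real (Suc k) powr (-\<beta> - 1)"
    using \<open>0 \<le> 1 - exp (- a / real (Suc k))\<close> by (simp only: powr_Suc_div) simp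
qed

lemma coll_prob_bounds:
  "0 \<le> coll_prob n (Suc k)" "coll_prob n (Suc k) \<le> 1"
  "coll_prob n (Suc k) \<le> mm n / real (Suc k)"
  "1 - exp (- mm n / real (Suc k)) \<le> coll_prob n (Suc k)"
  using qprod_le1[of n "Suc k"] qprod_nonneg[of n "Suc k"] qprod_weierstrass[of "Suc k" n]
    qprod_upper[of "Suc k" n]
  by (auto simp: coll_prob_eq)

lemma mm_nonneg: "mm n \<ge> 0"
  unfolding mm_def by (cases n) auto

lemma coal_summable:
  assumes "\<beta> > 0"
  shows "summable (\<lambda>k. real (Suc k) powr (-\<beta>) * coll_prob n (Suc k))"
proof (rule summable_comparison_test')
  show "summable (\<lambda>k. mm n * real (Suc k) powr (-\<beta> - 1))"
    using assms by (intro summable_mult summable_powr_Suc) auto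
  fix k
  have "real (Suc k) powr (-\<beta>) * coll_prob n (Suc k) \<le> real (Suc k) powr (-\<beta>) * (mm n / real (Suc k))"
    using coll_prob_bounds[of n k] by (intro mult_left_mono) auto
  then show "norm (real (Suc k) powr (-\<beta>) * coll_prob n (Suc k)) \<le> mm n * real (Suc k) powr (-\<beta> - 1)"
    using coll_prob_bounds[of n k] by (simp only: powr_Suc_div) simp
qed

lemma coal_lower:
  assumes "\<beta> > 0"
  shows "Gs \<beta> (mm n) \<le> coal_rate \<beta> n"
  unfolding Gs_def coal_rate_def
  using coll_prob_bounds[of n] assms
  by (intro suminf_le Gs_summable coal_summable mm_nonneg mult_left_mono) auto

lemma coal_upper:
  assumes "\<beta> > 0" "n \<ge> 1"
  shows "coal_rate \<beta> n \<le> Gs \<beta> (mm n) + (\<Sum>k<n-1. real (Suc k) powr (-\<beta>))"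
proof -
  define b where "b k = (if Suc k < n then real (Suc k) powr (-\<beta>)
      else real (Suc k - n + 1) powr (-\<beta>) * (1 - exp (- mm n / real (Suc k - n + 1))))" for k
  have shift: "b (k + (n - 1)) = real (Suc k) powr (-\<beta>) * (1 - exp (- mm n / real (Suc k)))" for k
    using assms by (simp add: b_def)
  have sb': "summable (\<lambda>k. b (k + (n - 1)))"
    unfolding shift using assms by (intro Gs_summable mm_nonneg) auto
  then have sb: "summable b" by (simp add: summable_iff_shift)
  have "coal_rate \<beta> n \<le> suminf b"
    unfolding coal_rate_def
  proof (intro suminf_le coal_summable sb assms)
    fix k
    show "real (Suc k) powr - \<beta> * coll_prob n (Suc k) \<le> b k"
    proof (cases "Suc k < n")
      case True
      then show ?thesis using coll_prob_bounds(2)[of n k] by (simp add: b_def mult_left_le)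
    next
      case False
      have pl: "coll_prob n (Suc k) \<le> 1 - exp (- mm n / real (Suc k - n + 1))"
        using qprod_lower[of n "Suc k"] False by (simp add: coll_prob_eq)
      have pw: "real (Suc k) powr (-\<beta>) \<le> real (Suc k - n + 1) powr (-\<beta>)"
        using False assms by (intro powr_mono2') auto
      have "real (Suc k) powr - \<beta> * coll_prob n (Suc k) \<le> real (Suc k - n + 1) powr (-\<beta>) * coll_prob n (Suc k)"
        using pw coll_prob_bounds(1)[of n k] by (rule mult_right_mono)
      also have "\<dots> \<le> b k" using pl False by (simp add: b_def mult_left_mono)
      finally show ?thesis .
    qed
  qed
  also have "suminf b = (\<Sum>k. b (k + (n - 1))) + sum b {..<n-1}"
    by (rule suminf_split_initial_segment[OF sb])
  also have "(\<Sum>k. b (k + (n - 1))) = Gs \<beta> (mm n)" unfolding shift Gs_def ..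
  also have "sum b {..<n-1} = (\<Sum>k<n-1. real (Suc k) powr (-\<beta>))"
    by (intro sum.cong) (auto simp: b_def)
  finally show ?thesis .
qed



definition Af :: "real \<Rightarrow> real \<Rightarrow> real" where
  "Af \<beta> u = u powr (\<beta> - 2) * (1 - exp (- u))"
definition Bf :: "real \<Rightarrow> real \<Rightarrow> real" where
  "Bf \<beta> u = u powr (\<beta> - 1) * exp (- u) / (1 - \<beta>)"
definition Ff :: "real \<Rightarrow> real \<Rightarrow> real" where
  "Ff \<beta> u = - (u powr (\<beta> - 1) * (1 - exp (- u))) / (1 - \<beta>)"

lemma Af_nonneg: "u \<ge> 0 \<Longrightarrow> Af \<beta> u \<ge> 0"
  unfolding Af_def by (intro mult_nonneg_nonneg) auto

lemma Bf_nonneg: "\<beta> < 1 \<Longrightarrow> Bf \<beta> u \<ge> 0"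
  unfolding Bf_def by (intro divide_nonneg_pos mult_nonneg_nonneg) auto

lemma Ff_deriv:
  assumes "u > 0" "\<beta> < 1"
  shows "(Ff \<beta> has_real_derivative (Af \<beta> u - Bf \<beta> u)) (at u)"
proof -
  have d: "((\<lambda>u. u powr (\<beta> - 1) * (1 - exp (- u))) has_real_derivative
      ((\<beta> - 1) * u powr (\<beta> - 2) * (1 - exp (- u)) + u powr (\<beta> - 1) * exp (- u))) (at u)"
    using assms by (auto intro!: derivative_eq_intros simp: algebra_simps)
  have "(Ff \<beta> has_real_derivative
     - (((\<beta> - 1) * u powr (\<beta> - 2) * (1 - exp (- u)) + u powr (\<beta> - 1) * exp (- u))) / (1 - \<beta>)) (at u)"
    unfolding Ff_def by (intro DERIV_cdivide DERIV_minus d)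
  also have "- (((\<beta> - 1) * u powr (\<beta> - 2) * (1 - exp (- u)) + u powr (\<beta> - 1) * exp (- u))) / (1 - \<beta>)
      = Af \<beta> u - Bf \<beta> u"
  proof -
    have "(\<beta> - 1) * u powr (\<beta> - 2) * (1 - exp (- u)) = - ((1 - \<beta>) * Af \<beta> u)"
      unfolding Af_def by (simp add: algebra_simps)
    moreover have "u powr (\<beta> - 1) * exp (- u) = (1 - \<beta>) * Bf \<beta> u"
      unfolding Bf_def using assms by simp
    ultimately show ?thesis using assms by (simp add: field_simps)
  qed
  finally show ?thesis .
qed

lemma Af_has_integral:
  assumes "0 < c" "c \<le> d" "\<beta> < 1"
  shows "(Af \<beta> has_integral (integral {c..d} (Bf \<beta>) + Ff \<beta> d - Ff \<beta> c)) {c..d}"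
proof -
  have "((\<lambda>u. Af \<beta> u - Bf \<beta> u) has_integral (Ff \<beta> d - Ff \<beta> c)) {c..d}"
  proof (rule fundamental_theorem_of_calculus[OF assms(2)])
    fix x assume "x \<in> {c..d}"
    then have "x > 0" using assms by auto
    then show "(Ff \<beta> has_vector_derivative Af \<beta> x - Bf \<beta> x) (at x within {c..d})"
      using Ff_deriv[of x \<beta>] assms
      by (simp add: has_real_derivative_iff_has_vector_derivative[symmetric] has_field_derivative_at_within)
  qed
  moreover have "(Bf \<beta> has_integral integral {c..d} (Bf \<beta>)) {c..d}"
  proof -
    have "continuous_on {c..d} (Bf \<beta>)"
      unfolding Bf_def using assms by (auto intro!: continuous_intros)
    then show ?thesis by (simp add: integrable_continuous_real has_integral_integral[symmetric])
  qed
  ultimately have "((\<lambda>u. (Af \<beta> u - Bf \<beta> u) + Bf \<beta> u) has_integral (Ff \<beta> d - Ff \<beta> c + integral {c..d} (Bf \<beta>))) {c..d}"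
    by (rule has_integral_add)
  then show ?thesis by (simp add: algebra_simps)
qed



definition SN :: "nat \<Rightarrow> real set" where "SN N = {1 / (real N + 1) .. real N + 1}"

lemma SN_mono: "SN N \<subseteq> SN (Suc N)"
proof
  fix u assume "u \<in> SN N"
  moreover have "1 / (real (Suc N) + 1) \<le> 1 / (real N + 1)" by (simp add: frac_le)
  ultimately show "u \<in> SN (Suc N)" unfolding SN_def by auto
qed

lemma SN_eventually:
  assumes "u > 0"
  shows "eventually (\<lambda>N. u \<in> SN N) sequentially"
proof -
  obtain N0 :: nat where N0: "real N0 \<ge> max u (1 / u)" using real_arch_simple by blast
  show ?thesis
  proof (rule eventually_sequentiallyI[of N0])
    fix N assume "N \<ge> N0"
    moreover have "real N0 \<le> real N" using \<open>N \<ge> N0\<close> by simp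
    ultimately have "real N \<ge> max u (1 / u)" using N0 by linarith
    then have "u \<le> real N + 1" "1 / u \<le> real N + 1" by auto
    then have "1 / (real N + 1) \<le> u" using assms by (simp add: field_simps)
    then show "u \<in> SN N" using \<open>u \<le> real N + 1\<close> unfolding SN_def by auto
  qed
qed

lemma SN_pos: "u \<in> SN N \<Longrightarrow> u > 0"
  unfolding SN_def by (auto intro: less_le_trans[of 0 "1 / (real N + 1)"])

lemma nn_SN_LIMSEQ:
  fixes f :: "real \<Rightarrow> real"
  assumes [measurable]: "f \<in> borel_measurable borel"
  shows "(\<lambda>N. \<integral>\<^sup>+u. ennreal (indicator (SN N) u * f u) \<partial>lborel)
      \<longlonglongrightarrow> (\<integral>\<^sup>+u. ennreal (indicator {0<..} u * f u) \<partial>lborel)"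
proof (rule nn_integral_LIMSEQ)
  show "incseq (\<lambda>N u. ennreal (indicator (SN N) u * f u))"
  proof (rule incseq_SucI, rule le_funI)
    fix N u
    show "ennreal (indicator (SN N) u * f u) \<le> ennreal (indicator (SN (Suc N)) u * f u)"
      using SN_mono[of N] by (cases "u \<in> SN N"; cases "u \<in> SN (Suc N)") (auto simp: ennreal_leI)
  qed
  show "(\<lambda>u. ennreal (indicator (SN N) u * f u)) \<in> borel_measurable lborel" for N
    unfolding SN_def by measurable
  fix u
  show "(\<lambda>N. ennreal (indicator (SN N) u * f u)) \<longlonglongrightarrow> ennreal (indicator {0<..} u * f u)"
  proof (cases "u > 0")
    case True
    show ?thesis
      by (rule tendsto_eventually) (use SN_eventually[OF True] True in \<open>auto elim!: eventually_mono\<close>)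
  next
    case False
    then have "u \<notin> SN N" for N using SN_pos by force
    then show ?thesis using False by simp
  qed
qed

lemma Af_nn_integral:
  assumes "0 < \<beta>" "\<beta> < 1"
  shows "(\<integral>\<^sup>+u. ennreal (indicator {0<..} u * Af \<beta> u) \<partial>lborel) = ennreal (Gamma \<beta> / (1 - \<beta>))"
proof -
  have mA[measurable]: "Af \<beta> \<in> borel_measurable borel" unfolding Af_def by measurable
  have mB[measurable]: "Bf \<beta> \<in> borel_measurable borel" unfolding Bf_def by measurable
  define IB where "IB N = integral (SN N) (Bf \<beta>)" for N
  have SNle: "1 / (real N + 1) \<le> real N + 1" for N
    by (smt (verit, ccfv_SIG) divide_le_eq_1_pos of_nat_0_le_iff)
  have hB: "(Bf \<beta> has_integral IB N) (SN N)" for N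
  proof -
    have "continuous_on (SN N) (Bf \<beta>)"
      unfolding Bf_def SN_def using assms
      by (auto intro!: continuous_intros simp: less_le_trans[of 0 "1 / (real N + 1)"])
    then show ?thesis unfolding IB_def SN_def
      by (simp add: integrable_continuous_real has_integral_integral[symmetric])
  qed
  have nB: "(\<integral>\<^sup>+u. ennreal (indicator (SN N) u * Bf \<beta> u) \<partial>lborel) = ennreal (IB N)" for N
    by (rule nn_integral_has_integral_lebesgue[OF _ hB]) (use Bf_nonneg assms in auto)
  have gam: "(\<integral>\<^sup>+u. ennreal (indicator {0<..} u * Bf \<beta> u) \<partial>lborel) = ennreal (Gamma \<beta> / (1 - \<beta>))"
  proof -
    have "(\<integral>\<^sup>+u. ennreal (indicator {0<..} u * Bf \<beta> u) \<partial>lborel)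
        = (\<integral>\<^sup>+u. ennreal (1 / (1 - \<beta>)) * ennreal (indicator {0..} u * u powr (\<beta> - 1) / exp u) \<partial>lborel)"
    proof (intro nn_integral_cong)
      fix u :: real
      show "ennreal (indicator {0<..} u * Bf \<beta> u) = ennreal (1 / (1 - \<beta>)) * ennreal (indicator {0..} u * u powr (\<beta> - 1) / exp u)"
        using assms by (cases "u > 0"; cases "u = 0")
          (auto simp: Bf_def ennreal_mult[symmetric] exp_minus field_simps indicator_def)
    qed
    also have "\<dots> = ennreal (1 / (1 - \<beta>)) * ennreal (Gamma \<beta>)"
      by (subst nn_integral_cmult) (auto simp: Gamma_conv_nn_integral_real assms)
    also have "\<dots> = ennreal (Gamma \<beta> / (1 - \<beta>))"
      using assms Gamma_real_pos[of \<beta>] by (simp add: ennreal_mult[symmetric])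
    finally show ?thesis .
  qed
  have IB_lim: "IB \<longlonglongrightarrow> Gamma \<beta> / (1 - \<beta>)"
  proof (rule tendsto_ennrealD)
    show "(\<lambda>N. ennreal (IB N)) \<longlonglongrightarrow> ennreal (Gamma \<beta> / (1 - \<beta>))"
      using nn_SN_LIMSEQ[OF mB] unfolding nB gam .
    show "\<forall>\<^sub>F x in sequentially. 0 \<le> IB x"
      by (intro always_eventually allI has_integral_nonneg[OF hB]) (use Bf_nonneg assms in auto)
    show "0 \<le> Gamma \<beta> / (1 - \<beta>)" using assms Gamma_real_pos[of \<beta>] by simp
  qed
  have F1: "(\<lambda>N. Ff \<beta> (real N + 1)) \<longlonglongrightarrow> 0"
  proof -
    have L: "(\<lambda>N::nat. (real N + 1) powr (\<beta> - 1) * (1 - exp (- (real N + 1)))) \<longlonglongrightarrow> 0"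
      using assms by real_asymp
    show ?thesis unfolding Ff_def
      using tendsto_divide[OF tendsto_minus[OF L] tendsto_const[of "1 - \<beta>"]] assms by simp
  qed
  have F2: "(\<lambda>N. Ff \<beta> (1 / (real N + 1))) \<longlonglongrightarrow> 0"
  proof -
    have lim0: "(\<lambda>N::nat. (1 / (real N + 1)) powr \<beta>) \<longlonglongrightarrow> 0"
      using assms by real_asymp
    have L: "(\<lambda>N::nat. (1 / (real N + 1)) powr (\<beta> - 1) * (1 - exp (- (1 / (real N + 1))))) \<longlonglongrightarrow> 0"
    proof (rule tendsto_sandwich[OF _ _ tendsto_const lim0])
      show "\<forall>\<^sub>F N in sequentially. 0 \<le> (1 / (real N + 1)) powr (\<beta> - 1) * (1 - exp (- (1 / (real N + 1))))"
        by (auto intro!: mult_nonneg_nonneg)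
      show "\<forall>\<^sub>F N in sequentially. (1 / (real N + 1)) powr (\<beta> - 1) * (1 - exp (- (1 / (real N + 1)))) \<le> (1 / (real N + 1)) powr \<beta>"
      proof (intro always_eventually allI)
        fix N :: nat
        let ?x = "1 / (real N + 1)"
        have "?x powr (\<beta> - 1) * (1 - exp (- ?x)) \<le> ?x powr (\<beta> - 1) * ?x"
          by (intro mult_left_mono one_minus_exp_le) auto
        also have "\<dots> = ?x powr \<beta>" by (simp add: powr_diff field_simps)
        finally show "?x powr (\<beta> - 1) * (1 - exp (- ?x)) \<le> ?x powr \<beta>" .
      qed
    qed
    show ?thesis unfolding Ff_def
      using tendsto_divide[OF tendsto_minus[OF L] tendsto_const[of "1 - \<beta>"]] assms by simp
  qed
  define IA where "IA N = IB N + Ff \<beta> (real N + 1) - Ff \<beta> (1 / (real N + 1))" for N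
  have IA_lim: "IA \<longlonglongrightarrow> Gamma \<beta> / (1 - \<beta>)"
    unfolding IA_def using tendsto_diff[OF tendsto_add[OF IB_lim F1] F2] by simp
  have hA: "(Af \<beta> has_integral IA N) (SN N)" for N
    unfolding IA_def IB_def SN_def using Af_has_integral[of "1 / (real N + 1)" "real N + 1" \<beta>] assms SNle[of N]
    by simp
  have nA: "(\<integral>\<^sup>+u. ennreal (indicator (SN N) u * Af \<beta> u) \<partial>lborel) = ennreal (IA N)" for N
    by (rule nn_integral_has_integral_lebesgue[OF _ hA]) (use Af_nonneg SN_pos in \<open>force\<close>)
  have l1: "(\<lambda>N. ennreal (IA N)) \<longlonglongrightarrow> (\<integral>\<^sup>+u. ennreal (indicator {0<..} u * Af \<beta> u) \<partial>lborel)"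
    using nn_SN_LIMSEQ[OF mA] unfolding nA .
  have l2: "(\<lambda>N. ennreal (IA N)) \<longlonglongrightarrow> ennreal (Gamma \<beta> / (1 - \<beta>))"
    by (rule tendsto_ennrealI[OF IA_lim])
  show ?thesis using LIMSEQ_unique[OF l1 l2] .
qed



lemma h_div_antimono:
  fixes u v :: real
  assumes "0 < u" "u \<le> v"
  shows "(1 - exp (- v)) / v \<le> (1 - exp (- u)) / u"
proof (rule DERIV_nonpos_imp_nonincreasing[where f="\<lambda>x. (1 - exp (- x)) / x", OF assms(2)])
  fix x assume x: "u \<le> x" "x \<le> v"
  then have xp: "x > 0" using assms by auto
  have "((\<lambda>x. (1 - exp (- x)) / x) has_real_derivative ((exp (- x) * x - (1 - exp (- x))) / (x * x))) (at x)"
    using xp by (auto intro!: derivative_eq_intros simp: field_simps)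
  moreover have "(exp (- x) * x - (1 - exp (- x))) / (x * x) \<le> 0"
  proof -
    have "1 + x \<le> exp x" using exp_ge_add_one_self[of x] by simp
    then have "exp (- x) * (1 + x) \<le> exp (-x) * exp x" by (intro mult_left_mono) auto
    then have "exp (- x) * x - (1 - exp (- x)) \<le> 0" by (simp add: exp_minus field_simps)
    then show ?thesis using xp by (intro divide_nonpos_pos) auto
  qed
  ultimately show "\<exists>y. ((\<lambda>x. (1 - exp (- x)) / x) has_real_derivative y) (at x) \<and> y \<le> 0" by blast
qed

lemma Af_alt: "u > 0 \<Longrightarrow> Af \<beta> u = u powr (\<beta> - 1) * ((1 - exp (- u)) / u)"
  unfolding Af_def by (simp add: powr_diff field_simps power2_eq_square)

lemma Af_antimono:
  assumes "0 < u" "u \<le> v" "\<beta> < 1"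
  shows "Af \<beta> v \<le> Af \<beta> u"
proof -
  have "v powr (\<beta> - 1) * ((1 - exp (- v)) / v) \<le> u powr (\<beta> - 1) * ((1 - exp (- u)) / u)"
  proof (rule mult_mono)
    show "v powr (\<beta> - 1) \<le> u powr (\<beta> - 1)" using assms by (intro powr_mono2') auto
    show "(1 - exp (- v)) / v \<le> (1 - exp (- u)) / u" by (rule h_div_antimono) (use assms in auto)
    show "0 \<le> u powr (\<beta> - 1)" by simp
    show "0 \<le> (1 - exp (- v)) / v" using assms by auto
  qed
  then show ?thesis using assms by (simp add: Af_alt)
qed

definition PP :: "real \<Rightarrow> nat \<Rightarrow> real set" where
  "PP a j = {a / (real j + 2) <.. a / (real j + 1)}"

lemma PP_iff:
  assumes "a > 0"
  shows "u \<in> PP a j \<longleftrightarrow> (0 < u \<and> u \<le> a \<and> j = nat \<lfloor>a / u\<rfloor> - 1)"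
proof
  assume u: "u \<in> PP a j"
  have "a / (real j + 2) > 0" using assms by simp
  then have up: "u > 0" using u unfolding PP_def by auto
  have "u \<le> a / (real j + 1)" using u unfolding PP_def by auto
  also have "\<dots> \<le> a" using assms by (simp add: divide_le_eq)
  finally have ua: "u \<le> a" .
  have l1: "real j + 1 \<le> a / u" using u up unfolding PP_def by (auto simp: field_simps)
  have l2: "a / u < real j + 2" using u up unfolding PP_def by (auto simp: field_simps)
  have "\<lfloor>a / u\<rfloor> = int j + 1" using l1 l2 by (simp add: floor_eq_iff)
  then show "0 < u \<and> u \<le> a \<and> j = nat \<lfloor>a / u\<rfloor> - 1" using up ua by simp
next
  assume h: "0 < u \<and> u \<le> a \<and> j = nat \<lfloor>a / u\<rfloor> - 1"
  then have g1: "a / u \<ge> 1" by (simp add: field_simps)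
  then have fl: "\<lfloor>a / u\<rfloor> \<ge> 1" by linarith
  have n1: "nat \<lfloor>a / u\<rfloor> \<ge> 1" using fl by linarith
  have "real (nat \<lfloor>a / u\<rfloor> - 1) = real (nat \<lfloor>a / u\<rfloor>) - 1" using n1 by (simp add: of_nat_diff)
  also have "real (nat \<lfloor>a / u\<rfloor>) = of_int \<lfloor>a / u\<rfloor>" using fl by simp
  finally have "real j + 1 = of_int \<lfloor>a / u\<rfloor>" using h by simp
  then have l1: "real j + 1 \<le> a / u" and l2: "a / u < real j + 2" by linarith+
  then show "u \<in> PP a j" using h unfolding PP_def by (auto simp: field_simps)
qed

lemma PP_sum_indicator:
  assumes "a > 0"
  shows "(\<Sum>j. ennreal (indicator (PP a j) u * f u)) = ennreal (indicator {0<..a} u * f u)"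
proof (cases "0 < u \<and> u \<le> a")
  case True
  let ?j = "nat \<lfloor>a / u\<rfloor> - 1"
  have "(\<Sum>j. ennreal (indicator (PP a j) u * f u)) = (\<Sum>j\<in>{?j}. ennreal (indicator (PP a j) u * f u))"
    by (rule suminf_finite) (use PP_iff[OF assms] in auto)
  also have "\<dots> = ennreal (indicator {0<..a} u * f u)" using True PP_iff[OF assms] by simp
  finally show ?thesis .
next
  case False
  then have "u \<notin> PP a j" for j using PP_iff[OF assms] by blast
  then show ?thesis using False by simp
qed



definition Tf :: "real \<Rightarrow> real \<Rightarrow> real \<Rightarrow> real" where
  "Tf \<beta> a K = K powr (-\<beta>) * (1 - exp (- a / K))"

lemma Af_Tf:
  assumes "a > 0" "K > 0" "M > 0"
  shows "Af \<beta> (a / K) * (a / (K * M)) = a powr (\<beta> - 1) * Tf \<beta> a K * (K / M)"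
proof -
  have e1: "(a / K) powr (\<beta> - 2) = a powr (\<beta> - 1) * K powr (-\<beta>) * (K * K) / a"
  proof -
    have "(a / K) powr (\<beta> - 2) = a powr (\<beta> - 2) / K powr (\<beta> - 2)"
      using assms by (simp add: powr_divide)
    also have "a powr (\<beta> - 2) = a powr (\<beta> - 1) / a"
      using assms by (simp add: powr_diff power2_eq_square)
    also have "K powr (\<beta> - 2) = K powr \<beta> / (K * K)"
      using assms by (simp add: powr_diff power2_eq_square)
    finally show ?thesis using assms by (simp add: powr_minus field_simps)
  qed
  show ?thesis
    unfolding Af_def Tf_def e1 using assms by (simp add: field_simps)
qed

definition Ie :: "real \<Rightarrow> real \<Rightarrow> ennreal" where
  "Ie \<beta> a = (\<integral>\<^sup>+u. ennreal (indicator {0<..a} u * Af \<beta> u) \<partial>lborel)"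

lemma Ie_sum:
  assumes "a > 0"
  shows "Ie \<beta> a = (\<Sum>j. \<integral>\<^sup>+u. ennreal (indicator (PP a j) u * Af \<beta> u) \<partial>lborel)"
proof -
  have mA[measurable]: "Af \<beta> \<in> borel_measurable borel" unfolding Af_def by measurable
  have "Ie \<beta> a = (\<integral>\<^sup>+u. (\<Sum>j. ennreal (indicator (PP a j) u * Af \<beta> u)) \<partial>lborel)"
    unfolding Ie_def by (simp add: PP_sum_indicator[OF assms])
  also have "\<dots> = (\<Sum>j. \<integral>\<^sup>+u. ennreal (indicator (PP a j) u * Af \<beta> u) \<partial>lborel)"
    by (rule nn_integral_suminf) (unfold PP_def, measurable)
  finally show ?thesis .
qed

lemma PP_measure:
  assumes "a > 0"
  shows "emeasure lborel (PP a j) = ennreal (a / ((real j + 2) * (real j + 1)))"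
proof -
  have le: "a / (real j + 2) \<le> a / (real j + 1)" using assms by (intro divide_left_mono) auto
  have "a / (real j + 1) - a / (real j + 2) = a / ((real j + 2) * (real j + 1))"
    by (simp add: field_simps)
  then show ?thesis unfolding PP_def using emeasure_lborel_Ioc[OF le] by simp
qed

lemma piece_upper:
  assumes "a > 0" "\<beta> < 1"
  shows "(\<integral>\<^sup>+u. ennreal (indicator (PP a j) u * Af \<beta> u) \<partial>lborel)
     \<le> ennreal (a powr (\<beta> - 1) * Tf \<beta> a (real j + 2) * ((real j + 2) / (real j + 1)))"
proof -
  have "(\<integral>\<^sup>+u. ennreal (indicator (PP a j) u * Af \<beta> u) \<partial>lborel)
      \<le> (\<integral>\<^sup>+u. ennreal (Af \<beta> (a / (real j + 2))) * indicator (PP a j) u \<partial>lborel)"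
  proof (intro nn_integral_mono)
    fix u
    show "ennreal (indicator (PP a j) u * Af \<beta> u) \<le> ennreal (Af \<beta> (a / (real j + 2))) * indicator (PP a j) u"
    proof (cases "u \<in> PP a j")
      case True
      then have "a / (real j + 2) < u" unfolding PP_def by auto
      then have "Af \<beta> u \<le> Af \<beta> (a / (real j + 2))" using assms by (intro Af_antimono) auto
      then show ?thesis using True by (simp add: ennreal_leI)
    qed simp
  qed
  also have "\<dots> = ennreal (Af \<beta> (a / (real j + 2))) * emeasure lborel (PP a j)"
    by (rule nn_integral_cmult_indicator) (simp add: PP_def)
  also have "\<dots> = ennreal (Af \<beta> (a / (real j + 2)) * (a / ((real j + 2) * (real j + 1))))"
    using assms by (simp add: PP_measure ennreal_mult[symmetric] Af_nonneg)
  also have "Af \<beta> (a / (real j + 2)) * (a / ((real j + 2) * (real j + 1)))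
     = a powr (\<beta> - 1) * Tf \<beta> a (real j + 2) * ((real j + 2) / (real j + 1))"
    using assms by (intro Af_Tf) auto
  finally show ?thesis .
qed

lemma piece_lower:
  assumes "a > 0" "\<beta> < 1"
  shows "ennreal (a powr (\<beta> - 1) * Tf \<beta> a (real j + 1) * ((real j + 1) / (real j + 2)))
     \<le> (\<integral>\<^sup>+u. ennreal (indicator (PP a j) u * Af \<beta> u) \<partial>lborel)"
proof -
  have "a powr (\<beta> - 1) * Tf \<beta> a (real j + 1) * ((real j + 1) / (real j + 2))
     = Af \<beta> (a / (real j + 1)) * (a / ((real j + 1) * (real j + 2)))"
    using assms by (intro Af_Tf[symmetric]) auto
  also have "ennreal \<dots> = ennreal (Af \<beta> (a / (real j + 1))) * emeasure lborel (PP a j)"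
    using assms by (simp add: PP_measure ennreal_mult[symmetric] Af_nonneg mult.commute)
  also have "\<dots> = (\<integral>\<^sup>+u. ennreal (Af \<beta> (a / (real j + 1))) * indicator (PP a j) u \<partial>lborel)"
    by (rule nn_integral_cmult_indicator[symmetric]) (simp add: PP_def)
  also have "\<dots> \<le> (\<integral>\<^sup>+u. ennreal (indicator (PP a j) u * Af \<beta> u) \<partial>lborel)"
  proof (intro nn_integral_mono)
    fix u
    show "ennreal (Af \<beta> (a / (real j + 1))) * indicator (PP a j) u \<le> ennreal (indicator (PP a j) u * Af \<beta> u)"
    proof (cases "u \<in> PP a j")
      case True
      then have "u \<le> a / (real j + 1)" "0 < u" using PP_iff[OF assms(1)] unfolding PP_def by auto
      then have "Af \<beta> (a / (real j + 1)) \<le> Af \<beta> u" using assms by (intro Af_antimono) auto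
      then show ?thesis using True by (simp add: ennreal_leI)
    qed simp
  qed
  finally show ?thesis .
qed



definition Zc :: "real \<Rightarrow> real" where "Zc \<beta> = (\<Sum>j. real (Suc j) powr (-1 - \<beta>))"

lemma Tf_bounds:
  assumes "a \<ge> 0" "K > 0"
  shows "0 \<le> Tf \<beta> a K" "Tf \<beta> a K \<le> K powr (-\<beta>)"
  using assms unfolding Tf_def by (auto intro!: mult_nonneg_nonneg mult_left_le)

lemma powr_div_self: "(K::real) > 0 \<Longrightarrow> K powr (-\<beta>) / K = K powr (-1 - \<beta>)"
proof -
  assume K: "K > 0"
  have "K powr (-\<beta> - 1) = K powr (-\<beta>) / K powr 1" using K by (simp add: powr_diff)
  moreover have e: "-1 - \<beta> = -\<beta> - 1" by simp
  ultimately show ?thesis using K by (subst e) simp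
qed

lemma Ie_bounds:
  assumes "a > 0" "0 < \<beta>" "\<beta> < 1"
  shows "\<exists>i. Ie \<beta> a = ennreal i \<and> a powr (\<beta> - 1) * (Gs \<beta> a - Zc \<beta>) \<le> i \<and> i \<le> a powr (\<beta> - 1) * (Gs \<beta> a + Zc \<beta>)"
proof -
  define t where "t j = Tf \<beta> a (real j + 1)" for j
  define c where "c = a powr (\<beta> - 1)"
  have c0: "c \<ge> 0" unfolding c_def by simp
  define L where "L j = c * Tf \<beta> a (real j + 1) * ((real j + 1) / (real j + 2))" for j
  define U where "U j = c * Tf \<beta> a (real j + 2) * ((real j + 2) / (real j + 1))" for j
  have t0: "0 \<le> t j" for j unfolding t_def using assms by (intro Tf_bounds) auto
  have t1: "t j \<le> real (Suc j) powr (-\<beta>)" for j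
    unfolding t_def using Tf_bounds(2)[of a "real j + 1" \<beta>] assms by (simp add: add.commute)
  have st: "summable t"
    unfolding t_def Tf_def using Gs_summable[of \<beta> a] assms by (simp add: add.commute)
  have Gs_eq: "Gs \<beta> a = suminf t"
    unfolding Gs_def t_def Tf_def by (simp add: add.commute)
  have sZ: "summable (\<lambda>j. real (Suc j) powr (-1 - \<beta>))"
    using assms by (intro summable_powr_Suc) auto
  define d1 where "d1 j = t j / (real j + 2)" for j
  have d1_le: "d1 j \<le> real (Suc j) powr (-1 - \<beta>)" for j
  proof -
    have "d1 j \<le> t j / (real j + 1)" unfolding d1_def using t0[of j] by (intro divide_left_mono) auto
    also have "\<dots> \<le> real (Suc j) powr (-\<beta>) / real (Suc j)" using t1[of j] by (simp add: add.commute divide_right_mono)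
    also have "\<dots> = real (Suc j) powr (-1 - \<beta>)" by (rule powr_div_self) simp
    finally show ?thesis .
  qed
  have d10: "0 \<le> d1 j" for j unfolding d1_def using t0[of j] by simp
  have sd1: "summable d1" by (rule summable_comparison_test'[OF sZ]) (use d1_le d10 in auto)
  have L_eq: "L j = c * (t j - d1 j)" for j
    unfolding L_def t_def d1_def by (simp add: field_simps)
  have sL: "summable L" unfolding L_eq by (intro summable_mult summable_diff st sd1)
  have L0: "0 \<le> L j" for j unfolding L_def
    by (intro mult_nonneg_nonneg c0 Tf_bounds divide_nonneg_nonneg) (use assms in auto)
  have sumL: "suminf L \<ge> c * (Gs \<beta> a - Zc \<beta>)"
  proof -
    have "suminf L = c * (suminf t - suminf d1)"
      unfolding L_eq by (simp add: suminf_mult suminf_diff st sd1 summable_diff)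
    moreover have "suminf d1 \<le> Zc \<beta>" unfolding Zc_def by (intro suminf_le sd1 sZ d1_le)
    ultimately show ?thesis using c0 Gs_eq by (simp add: mult_left_mono)
  qed
  define d2 where "d2 j = t (Suc j) / (real j + 1)" for j
  have d2_le: "d2 j \<le> real (Suc j) powr (-1 - \<beta>)" for j
  proof -
    have "t (Suc j) \<le> real (Suc (Suc j)) powr (-\<beta>)" by (rule t1)
    also have "\<dots> \<le> real (Suc j) powr (-\<beta>)" using assms by (intro powr_mono2') auto
    finally have "d2 j \<le> real (Suc j) powr (-\<beta>) / real (Suc j)"
      unfolding d2_def by (simp add: add.commute divide_right_mono)
    also have "\<dots> = real (Suc j) powr (-1 - \<beta>)" by (rule powr_div_self) simp
    finally show ?thesis .
  qed
  have d20: "0 \<le> d2 j" for j unfolding d2_def using t0[of "Suc j"] by simp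
  have sd2: "summable d2" by (rule summable_comparison_test'[OF sZ]) (use d2_le d20 in auto)
  have U_eq: "U j = c * (t (Suc j) + d2 j)" for j
    unfolding U_def t_def d2_def by (simp add: field_simps)
  have st': "summable (\<lambda>j. t (Suc j))" using st by (simp add: summable_Suc_iff)
  have sU: "summable U" unfolding U_eq by (intro summable_mult summable_add st' sd2)
  have U0: "0 \<le> U j" for j unfolding U_eq using c0 t0 d20 by simp
  have sumU: "suminf U \<le> c * (Gs \<beta> a + Zc \<beta>)"
  proof -
    have "suminf U = c * ((\<Sum>j. t (Suc j)) + suminf d2)"
      unfolding U_eq by (simp add: suminf_mult suminf_add st' sd2 summable_add)
    moreover have "suminf d2 \<le> Zc \<beta>" unfolding Zc_def by (intro suminf_le sd2 sZ d2_le)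
    moreover have "(\<Sum>j. t (Suc j)) \<le> suminf t"
      using suminf_split_head[OF st] t0[of 0] by simp
    ultimately show ?thesis using c0 Gs_eq by (simp add: mult_left_mono)
  qed
  have lo: "ennreal (suminf L) \<le> Ie \<beta> a"
  proof -
    have "ennreal (suminf L) = (\<Sum>j. ennreal (L j))" by (rule suminf_ennreal2[symmetric]) (use L0 sL in auto)
    also have "\<dots> \<le> (\<Sum>j. \<integral>\<^sup>+u. ennreal (indicator (PP a j) u * Af \<beta> u) \<partial>lborel)"
      by (intro suminf_le summableI) (unfold L_def c_def, rule piece_lower, use assms in auto)
    finally show ?thesis using Ie_sum[OF assms(1)] by simp
  qed
  have hi: "Ie \<beta> a \<le> ennreal (suminf U)"
  proof -
    have "Ie \<beta> a = (\<Sum>j. \<integral>\<^sup>+u. ennreal (indicator (PP a j) u * Af \<beta> u) \<partial>lborel)" by (rule Ie_sum[OF assms(1)])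
    also have "\<dots> \<le> (\<Sum>j. ennreal (U j))"
      by (intro suminf_le summableI) (unfold U_def c_def, rule piece_upper, use assms in auto)
    also have "\<dots> = ennreal (suminf U)" by (rule suminf_ennreal2) (use U0 sU in auto)
    finally show ?thesis .
  qed
  obtain i where i: "Ie \<beta> a = ennreal i" "i \<ge> 0"
    using hi by (cases "Ie \<beta> a") (auto simp: top_unique)
  have "suminf L \<le> i" using lo i by (simp add: ennreal_le_iff)
  moreover have "i \<le> suminf U" using hi i U0 sU by (simp add: ennreal_le_iff suminf_nonneg)
  ultimately show ?thesis using i sumL sumU unfolding c_def by (intro exI[of _ i]) auto
qed



lemma Ie_mono:
  assumes "a \<le> b"
  shows "Ie \<beta> a \<le> Ie \<beta> b"
  unfolding Ie_def
proof (intro nn_integral_mono)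
  fix u show "ennreal (indicator {0<..a} u * Af \<beta> u) \<le> ennreal (indicator {0<..b} u * Af \<beta> u)"
    using assms Af_nonneg[of u \<beta>] by (cases "0 < u \<and> u \<le> a"; cases "0 < u \<and> u \<le> b") (auto intro: ennreal_leI)
qed

lemma Ie_le_J:
  assumes "0 < \<beta>" "\<beta> < 1"
  shows "Ie \<beta> a \<le> ennreal (Gamma \<beta> / (1 - \<beta>))"
  unfolding Af_nn_integral[OF assms, symmetric] Ie_def
proof (intro nn_integral_mono)
  fix u show "ennreal (indicator {0<..a} u * Af \<beta> u) \<le> ennreal (indicator {0<..} u * Af \<beta> u)"
    using Af_nonneg[of u \<beta>] by (cases "0 < u \<and> u \<le> a"; cases "0 < u") (auto intro: ennreal_leI)
qed

lemma Ie_LIMSEQ: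
  assumes "0 < \<beta>" "\<beta> < 1"
  shows "(\<lambda>N. Ie \<beta> (real N)) \<longlonglongrightarrow> ennreal (Gamma \<beta> / (1 - \<beta>))"
  unfolding Af_nn_integral[OF assms, symmetric] Ie_def
proof (rule nn_integral_LIMSEQ)
  have mA[measurable]: "Af \<beta> \<in> borel_measurable borel" unfolding Af_def by measurable
  show "incseq (\<lambda>N u. ennreal (indicator {0<..real N} u * Af \<beta> u))"
  proof (rule incseq_SucI, rule le_funI)
    fix N u
    show "ennreal (indicator {0<..real N} u * Af \<beta> u) \<le> ennreal (indicator {0<..real (Suc N)} u * Af \<beta> u)"
      using Af_nonneg[of u \<beta>]
      by (cases "0 < u \<and> u \<le> real N"; cases "0 < u \<and> u \<le> real (Suc N)") (auto intro: ennreal_leI)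
  qed
  show "(\<lambda>u. ennreal (indicator {0<..real N} u * Af \<beta> u)) \<in> borel_measurable lborel" for N
    by measurable
  fix u
  show "(\<lambda>N. ennreal (indicator {0<..real N} u * Af \<beta> u)) \<longlonglongrightarrow> ennreal (indicator {0<..} u * Af \<beta> u)"
  proof (cases "u > 0")
    case True
    obtain N0 :: nat where "real N0 \<ge> u" using real_arch_simple by blast
    then have "eventually (\<lambda>N. u \<le> real N) sequentially"
      by (intro eventually_sequentiallyI[of N0]) (metis order_trans of_nat_mono)
    then show ?thesis
      by (intro tendsto_eventually) (use True in \<open>auto elim!: eventually_mono\<close>)
  next
    case False
    then show ?thesis by simp
  qed
qed

definition ia :: "real \<Rightarrow> real \<Rightarrow> real" where "ia \<beta> a = enn2real (Ie \<beta> a)"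

lemma Ie_ia:
  assumes "0 < \<beta>" "\<beta> < 1"
  shows "Ie \<beta> a = ennreal (ia \<beta> a)"
proof -
  have "Ie \<beta> a \<noteq> top" using Ie_le_J[OF assms, of a] by (auto simp: top_unique)
  then show ?thesis unfolding ia_def by (simp add: less_top ennreal_enn2real)
qed

lemma ia_lim:
  assumes "0 < \<beta>" "\<beta> < 1"
  shows "(ia \<beta> \<longlongrightarrow> Gamma \<beta> / (1 - \<beta>)) at_top"
proof -
  define J where "J = Gamma \<beta> / (1 - \<beta>)"
  have J0: "J \<ge> 0" unfolding J_def using assms Gamma_real_pos[of \<beta>] by simp
  have ia0: "ia \<beta> a \<ge> 0" for a unfolding ia_def by simp
  have iaJ: "ia \<beta> a \<le> J" for a
    using Ie_le_J[OF assms, of a] Ie_ia[OF assms, of a] J0 unfolding J_def by (simp add: ennreal_le_iff)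
  have iamono: "a \<le> b \<Longrightarrow> ia \<beta> a \<le> ia \<beta> b" for a b
    using Ie_mono[of a b \<beta>] Ie_ia[OF assms, of a] Ie_ia[OF assms, of b] ia0[of b] by (simp add: ennreal_le_iff)
  have seq: "(\<lambda>N. ia \<beta> (real N)) \<longlonglongrightarrow> J"
  proof (rule tendsto_ennrealD)
    show "(\<lambda>N. ennreal (ia \<beta> (real N))) \<longlonglongrightarrow> ennreal J"
      using Ie_LIMSEQ[OF assms] unfolding J_def Ie_ia[OF assms] .
  qed (use ia0 J0 in auto)
  show ?thesis
    unfolding J_def[symmetric]
  proof (rule order_tendstoI)
    fix y assume "y < J"
    then have "eventually (\<lambda>N. y < ia \<beta> (real N)) sequentially" using seq order_tendstoD(1) by blast
    then obtain N where N: "y < ia \<beta> (real N)" by (meson eventually_sequentially order_refl)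
    show "eventually (\<lambda>a. y < ia \<beta> a) at_top"
      using eventually_ge_at_top[of "real N"]
      proof eventually_elim
        case (elim a)
        then show ?case using N iamono[of "real N" a] by linarith
      qed
  next
    fix y assume "J < y"
    then show "eventually (\<lambda>a. ia \<beta> a < y) at_top"
      using iaJ by (intro always_eventually) (meson le_less_trans)
  qed
qed

lemma Gs_asymp:
  assumes "0 < \<beta>" "\<beta> < 1"
  shows "((\<lambda>a. a powr (\<beta> - 1) * Gs \<beta> a) \<longlongrightarrow> Gamma \<beta> / (1 - \<beta>)) at_top"
proof -
  have p0: "((\<lambda>a::real. a powr (\<beta> - 1)) \<longlongrightarrow> 0) at_top" using assms by real_asymp
  have lo: "((\<lambda>a. ia \<beta> a - a powr (\<beta> - 1) * Zc \<beta>) \<longlongrightarrow> Gamma \<beta> / (1 - \<beta>)) at_top"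
    using tendsto_diff[OF ia_lim[OF assms] tendsto_mult[OF p0 tendsto_const[of "Zc \<beta>"]]] by simp
  have hi: "((\<lambda>a. ia \<beta> a + a powr (\<beta> - 1) * Zc \<beta>) \<longlongrightarrow> Gamma \<beta> / (1 - \<beta>)) at_top"
    using tendsto_add[OF ia_lim[OF assms] tendsto_mult[OF p0 tendsto_const[of "Zc \<beta>"]]] by simp
  have bnd: "ia \<beta> a - a powr (\<beta> - 1) * Zc \<beta> \<le> a powr (\<beta> - 1) * Gs \<beta> a \<and>
             a powr (\<beta> - 1) * Gs \<beta> a \<le> ia \<beta> a + a powr (\<beta> - 1) * Zc \<beta>" if ap: "a > 0" for a
  proof -
    obtain i where i: "Ie \<beta> a = ennreal i" "a powr (\<beta> - 1) * (Gs \<beta> a - Zc \<beta>) \<le> i"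
      "i \<le> a powr (\<beta> - 1) * (Gs \<beta> a + Zc \<beta>)"
      using Ie_bounds[OF ap assms] by blast
    have Gs0: "Gs \<beta> a \<ge> 0" unfolding Gs_def
      by (intro suminf_nonneg Gs_summable mult_nonneg_nonneg) (use assms ap in auto)
    have Z0: "Zc \<beta> \<ge> 0" unfolding Zc_def
      by (intro suminf_nonneg summable_powr_Suc) (use assms in auto)
    have ia_eq: "ia \<beta> a = max 0 i" using i(1) unfolding ia_def
      by (cases "i \<ge> 0") (auto simp: ennreal_neg)
    have "0 \<le> a powr (\<beta> - 1) * (Gs \<beta> a + Zc \<beta>)" using Gs0 Z0 by simp
    then show ?thesis using i ia_eq by (simp add: algebra_simps)
  qed
  show ?thesis
  proof (rule tendsto_sandwich[OF _ _ lo hi])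
    show "\<forall>\<^sub>F a in at_top. ia \<beta> a - a powr (\<beta> - 1) * Zc \<beta> \<le> a powr (\<beta> - 1) * Gs \<beta> a"
      using eventually_gt_at_top[of "0::real"] by eventually_elim (use bnd in blast)
    show "\<forall>\<^sub>F a in at_top. a powr (\<beta> - 1) * Gs \<beta> a \<le> ia \<beta> a + a powr (\<beta> - 1) * Zc \<beta>"
      using eventually_gt_at_top[of "0::real"] by eventually_elim (use bnd in blast)
  qed
qed



lemma harm_le_ln: "n \<ge> 1 \<Longrightarrow> harm n \<le> ln (real n) + (1::real)"
  using euler_mascheroni_sequence_decreasing[of 1 n] by (simp add: harm_def)

lemma E_bound:
  assumes "n \<ge> 1" "0 < \<beta>" "\<beta> < 1"
  shows "(\<Sum>k<n-1. real (Suc k) powr (-\<beta>)) \<le> real n powr (1 - \<beta>) * (ln (real n) + 1)"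
proof -
  have "(\<Sum>k<n-1. real (Suc k) powr (-\<beta>)) \<le> (\<Sum>k<n-1. real n powr (1 - \<beta>) * inverse (real (Suc k)))"
  proof (intro sum_mono)
    fix k assume k: "k \<in> {..<n-1}"
    have "real (Suc k) powr (1 - \<beta>) \<le> real n powr (1 - \<beta>)"
      using k assms by (intro powr_mono2) auto
    moreover have "real (Suc k) powr (-\<beta>) = real (Suc k) powr (1 - \<beta>) * inverse (real (Suc k))"
      by (simp add: powr_diff powr_minus field_simps)
    ultimately show "real (Suc k) powr (-\<beta>) \<le> real n powr (1 - \<beta>) * inverse (real (Suc k))"
      by (simp add: mult_right_mono)
  qed
  also have "\<dots> = real n powr (1 - \<beta>) * harm (n - 1)"
    by (simp add: harm_altdef sum_distrib_left)
  also have "\<dots> \<le> real n powr (1 - \<beta>) * (ln (real n) + 1)"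
  proof (intro mult_left_mono)
    have "harm (n - 1) \<le> (harm n :: real)" by (intro harm_mono) auto
    also have "\<dots> \<le> ln (real n) + 1" using assms by (intro harm_le_ln) auto
    finally show "harm (n - 1) \<le> ln (real n) + 1" .
  qed simp
  finally show ?thesis .
qed

lemma part1:
  assumes "0 < \<beta>" "\<beta> < 1"
  shows "(\<lambda>n. real n powr (2 * (\<beta> - 1)) * coal_rate \<beta> n) \<longlonglongrightarrow> 2 powr (\<beta> - 1) * Gamma \<beta> / (1 - \<beta>)"
proof -
  have mm_lim: "filterlim mm at_top sequentially"
    unfolding mm_def by real_asymp
  have G1: "(\<lambda>n. mm n powr (\<beta> - 1) * Gs \<beta> (mm n)) \<longlonglongrightarrow> Gamma \<beta> / (1 - \<beta>)"
    using filterlim_compose[OF Gs_asymp[OF assms] mm_lim] by (simp add: o_def)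
  have C1: "(\<lambda>n. real n powr (2 * (\<beta> - 1)) * mm n powr (1 - \<beta>)) \<longlonglongrightarrow> 2 powr (\<beta> - 1)"
  proof -
    have L: "(\<lambda>n. real n powr (2 * (\<beta> - 1)) * mm n powr (1 - \<beta>)) \<longlonglongrightarrow> (1/2) powr (1 - \<beta>)"
      unfolding mm_def using assms by real_asymp
    have "(1/2::real) powr (1 - \<beta>) = 1 powr (1 - \<beta>) / 2 powr (1 - \<beta>)"
      by (rule powr_divide)
    also have "\<dots> = 1 / 2 powr (1 - \<beta>)" by simp
    also have "\<dots> = 2 powr (- (1 - \<beta>))" by (rule powr_minus_divide[symmetric])
    also have "- (1 - \<beta>) = \<beta> - 1" by simp
    finally have e: "(1/2::real) powr (1 - \<beta>) = 2 powr (\<beta> - 1)" .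
    show ?thesis using L unfolding e .
  qed
  have main: "(\<lambda>n. (real n powr (2 * (\<beta> - 1)) * mm n powr (1 - \<beta>)) * (mm n powr (\<beta> - 1) * Gs \<beta> (mm n)))
      \<longlonglongrightarrow> 2 powr (\<beta> - 1) * (Gamma \<beta> / (1 - \<beta>))"
    by (rule tendsto_mult[OF C1 G1])
  have ev_mm: "eventually (\<lambda>n. mm n > 0) sequentially"
    using mm_lim by (simp add: filterlim_at_top_dense)
  have main': "(\<lambda>n. real n powr (2 * (\<beta> - 1)) * Gs \<beta> (mm n)) \<longlonglongrightarrow> 2 powr (\<beta> - 1) * Gamma \<beta> / (1 - \<beta>)"
  proof (rule Lim_transform_eventually[OF main[unfolded times_divide_eq_right]])
    show "\<forall>\<^sub>F n in sequentially. real n powr (2 * (\<beta> - 1)) * mm n powr (1 - \<beta>) * (mm n powr (\<beta> - 1) * Gs \<beta> (mm n))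
       = real n powr (2 * (\<beta> - 1)) * Gs \<beta> (mm n)"
      using ev_mm
    proof eventually_elim
      case (elim n)
      have "mm n powr (1 - \<beta>) * mm n powr (\<beta> - 1) = 1"
        using elim by (simp add: powr_add[symmetric])
      then show ?case by (metis (no_types, lifting) mult.assoc mult.right_neutral)
    qed
  qed
  have err: "(\<lambda>n. real n powr (\<beta> - 1) * (ln (real n) + 1)) \<longlonglongrightarrow> 0"
    using assms by real_asymp
  have hi: "(\<lambda>n. real n powr (2 * (\<beta> - 1)) * Gs \<beta> (mm n) + real n powr (\<beta> - 1) * (ln (real n) + 1))
     \<longlonglongrightarrow> 2 powr (\<beta> - 1) * Gamma \<beta> / (1 - \<beta>)"
    using tendsto_add[OF main' err] by simp
  show ?thesis
  proof (rule tendsto_sandwich[OF _ _ main' hi])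
    show "\<forall>\<^sub>F n in sequentially. real n powr (2 * (\<beta> - 1)) * Gs \<beta> (mm n) \<le> real n powr (2 * (\<beta> - 1)) * coal_rate \<beta> n"
      using coal_lower[OF assms(1)] by (intro always_eventually allI mult_left_mono) auto
    show "\<forall>\<^sub>F n in sequentially. real n powr (2 * (\<beta> - 1)) * coal_rate \<beta> n
        \<le> real n powr (2 * (\<beta> - 1)) * Gs \<beta> (mm n) + real n powr (\<beta> - 1) * (ln (real n) + 1)"
      using eventually_ge_at_top[of "1::nat"]
    proof eventually_elim
      case (elim n)
      have "real n powr (2 * (\<beta> - 1)) * coal_rate \<beta> n
          \<le> real n powr (2 * (\<beta> - 1)) * (Gs \<beta> (mm n) + real n powr (1 - \<beta>) * (ln (real n) + 1))"
        using coal_upper[OF assms(1) elim] E_bound[OF elim assms]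
        by (intro mult_left_mono) auto
      also have "\<dots> = real n powr (2 * (\<beta> - 1)) * Gs \<beta> (mm n)
          + (real n powr (2 * (\<beta> - 1)) * real n powr (1 - \<beta>)) * (ln (real n) + 1)"
        by (simp add: algebra_simps)
      also have "real n powr (2 * (\<beta> - 1)) * real n powr (1 - \<beta>) = real n powr (\<beta> - 1)"
        using elim by (simp add: powr_add[symmetric] algebra_simps)
      finally show ?case .
    qed
  qed
qed



lemma powr_m1: "real (Suc k) powr (-1) = 1 / real (Suc k)"
  by (simp add: powr_minus_divide)

lemma mm_ge1: "n \<ge> 2 \<Longrightarrow> mm n \<ge> 1"
proof -
  assume n: "n \<ge> 2"
  then have "real n \<ge> 2" by simp
  then have "real n * (real n - 1) \<ge> 2 * 1" by (intro mult_mono) auto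
  then show ?thesis unfolding mm_def by simp
qed

lemma coal1_upper:
  assumes "n \<ge> 2"
  shows "coal_rate 1 n \<le> ln (mm n + 1) + 2"
proof -
  define m where "m = mm n"
  define M where "M = nat \<lceil>m\<rceil>"
  have m1: "m \<ge> 1" unfolding m_def using mm_ge1[OF assms] .
  have Mm: "real M \<ge> m" unfolding M_def by linarith
  have Mm2: "real M \<le> m + 1" unfolding M_def using m1 by linarith
  have M1: "M \<ge> 1" using Mm m1 by linarith
  define b where "b k = (if k < M then 1 / real (Suc k) else m * (1 / real k - 1 / real (Suc k)))" for k
  have lim: "(\<lambda>j. 1 / real (j + M)) \<longlonglongrightarrow> 0" by real_asymp
  have tel: "(\<lambda>j. 1 / real (j + M) - 1 / real (Suc (j + M))) sums (1 / real M)"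
    using telescope_sums'[OF lim] by simp
  have shift: "b (j + M) = m * (1 / real (j + M) - 1 / real (Suc (j + M)))" for j
    unfolding b_def by simp
  have sb': "summable (\<lambda>j. b (j + M))" unfolding shift
    using tel by (intro summable_mult) (auto simp: sums_iff)
  then have sb: "summable b" by (simp add: summable_iff_shift)
  have "coal_rate 1 n \<le> suminf b"
    unfolding coal_rate_def
  proof (intro suminf_le coal_summable sb)
    fix k
    show "real (Suc k) powr - 1 * coll_prob n (Suc k) \<le> b k"
    proof (cases "k < M")
      case True
      then show ?thesis using coll_prob_bounds(2)[of n k] by (simp add: b_def powr_m1 divide_right_mono)
    next
      case False
      then have k1: "k \<ge> 1" using M1 by simp
      have "real (Suc k) powr - 1 * coll_prob n (Suc k) \<le> (1 / real (Suc k)) * (m / real (Suc k))"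
        using coll_prob_bounds(3)[of n k] unfolding powr_m1 m_def by (intro mult_left_mono) auto
      also have "\<dots> = m * (1 / (real (Suc k) * real (Suc k)))" by simp
      also have "\<dots> \<le> m * (1 / (real k * real (Suc k)))"
        using m1 k1 by (intro mult_left_mono divide_left_mono mult_right_mono mult_pos_pos) auto
      also have "1 / (real k * real (Suc k)) = 1 / real k - 1 / real (Suc k)"
        using k1 by (simp add: field_simps)
      finally show ?thesis using False by (simp add: b_def)
    qed
  qed simp
  also have "suminf b = (\<Sum>j. b (j + M)) + sum b {..<M}"
    by (rule suminf_split_initial_segment[OF sb])
  also have "(\<Sum>j. b (j + M)) = m * (1 / real M)"
    unfolding shift using tel by (simp add: suminf_mult sums_iff)
  also have "sum b {..<M} = harm M"
    by (simp add: b_def harm_altdef divide_inverse)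
  also have "m * (1 / real M) \<le> 1" using Mm M1 by (simp add: field_simps)
  also have "harm M \<le> ln (real M) + (1::real)" using M1 by (rule harm_le_ln)
  also have "ln (real M) \<le> ln (m + 1)" using Mm2 M1 by simp
  finally show ?thesis unfolding m_def by simp
qed

lemma coal1_lower:
  assumes "n \<ge> 2" "c > 0"
  shows "(1 - exp (- c)) * ln (mm n / c) \<le> coal_rate 1 n"
proof -
  define m where "m = mm n"
  have m1: "m \<ge> 1" unfolding m_def using mm_ge1[OF assms(1)] .
  define N where "N = nat \<lfloor>m / c\<rfloor>"
  have N1: "m / c < real N + 1" unfolding N_def by linarith
  have N2: "real N \<le> m / c" unfolding N_def using m1 assms by (simp add: floor_le_iff)
  have "(1 - exp (- c)) * ln (m / c) \<le> (1 - exp (- c)) * ln (real N + 1)"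
    using N1 m1 assms by (intro mult_left_mono) auto
  also have "\<dots> \<le> (1 - exp (- c)) * harm N"
    using assms by (intro mult_left_mono ln_le_harm) auto
  also have "\<dots> = (\<Sum>k<N. (1 - exp (- c)) * (1 / real (Suc k)))"
    by (simp add: harm_altdef sum_distrib_left divide_inverse)
  also have "\<dots> \<le> (\<Sum>k<N. real (Suc k) powr (-1) * coll_prob n (Suc k))"
  proof (intro sum_mono)
    fix k assume k: "k \<in> {..<N}"
    have "real (Suc k) \<le> real N" using k by simp
    then have "real (Suc k) \<le> m / c" using N2 by linarith
    then have "c \<le> m / real (Suc k)" using assms by (simp add: field_simps)
    then have "1 - exp (- c) \<le> 1 - exp (- m / real (Suc k))" by simp
    also have "\<dots> \<le> coll_prob n (Suc k)" using coll_prob_bounds(4)[of n k] unfolding m_def by simp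
    finally show "(1 - exp (- c)) * (1 / real (Suc k)) \<le> real (Suc k) powr (-1) * coll_prob n (Suc k)"
      unfolding powr_m1 by (simp add: divide_right_mono)
  qed
  also have "\<dots> \<le> coal_rate 1 n"
    unfolding coal_rate_def
    by (intro sum_le_suminf coal_summable) (use coll_prob_bounds(1) in \<open>auto simp: powr_m1\<close>)
  finally show ?thesis unfolding m_def .
qed



lemma part2: "(\<lambda>n. coal_rate 1 n / ln (real n)) \<longlonglongrightarrow> 2"
proof (rule order_tendstoI)
  fix y :: real assume y: "y < 2"
  define c where "c = max 1 (ln (4 / (2 - y)))"
  have c0: "c > 0" unfolding c_def by simp
  have "exp (- c) \<le> exp (- ln (4 / (2 - y)))" unfolding c_def by simp
  also have "\<dots> = (2 - y) / 4" using y by (simp add: exp_minus)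
  finally have ec: "exp (- c) \<le> (2 - y) / 4" .
  have "(1 - exp (- c)) * 2 = 2 - 2 * exp (- c)" by simp
  moreover have "4 * exp (- c) \<le> 2 - y" using ec by simp
  ultimately have gt: "y < (1 - exp (- c)) * 2" using y by linarith
  have L: "(\<lambda>n. (1 - exp (- c)) * (ln (mm n) - ln c) / ln (real n)) \<longlonglongrightarrow> (1 - exp (- c)) * 2"
    unfolding mm_def by real_asymp
  have ev1: "eventually (\<lambda>n. y < (1 - exp (- c)) * (ln (mm n) - ln c) / ln (real n)) sequentially"
    using order_tendstoD(1)[OF L gt] .
  show "eventually (\<lambda>n. y < coal_rate 1 n / ln (real n)) sequentially"
    using ev1 eventually_ge_at_top[of "2::nat"]
  proof eventually_elim
    case (elim n)
    have lnpos: "ln (real n) > 0" using elim(2) by simp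
    have "ln (mm n / c) = ln (mm n) - ln c" using mm_ge1[OF elim(2)] c0 by (simp add: ln_div)
    then have "(1 - exp (- c)) * (ln (mm n) - ln c) \<le> coal_rate 1 n"
      using coal1_lower[OF elim(2) c0] by simp
    then have "(1 - exp (- c)) * (ln (mm n) - ln c) / ln (real n) \<le> coal_rate 1 n / ln (real n)"
      using lnpos by (simp add: divide_right_mono)
    then show ?case using elim(1) by linarith
  qed
next
  fix y :: real assume y: "2 < y"
  have U: "(\<lambda>n. (ln (mm n + 1) + 2) / ln (real n)) \<longlonglongrightarrow> 2"
    unfolding mm_def by real_asymp
  have ev1: "eventually (\<lambda>n. (ln (mm n + 1) + 2) / ln (real n) < y) sequentially"
    using order_tendstoD(2)[OF U y] .
  show "eventually (\<lambda>n. coal_rate 1 n / ln (real n) < y) sequentially"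
    using ev1 eventually_ge_at_top[of "2::nat"]
  proof eventually_elim
    case (elim n)
    have lnpos: "ln (real n) > 0" using elim(2) by simp
    have "coal_rate 1 n / ln (real n) \<le> (ln (mm n + 1) + 2) / ln (real n)"
      using coal1_upper[OF elim(2)] lnpos by (simp add: divide_right_mono)
    then show ?case using elim(1) by linarith
  qed
qed

theorem mainTheorem5:
  shows "(\<forall>\<beta>::real. 0 < \<beta> \<and> \<beta> < 1 \<longrightarrow>
           ((\<lambda>n. real n powr (2 * (\<beta> - 1)) * coal_rate \<beta> n)
              \<longlonglongrightarrow> 2 powr (\<beta> - 1) * Gamma \<beta> / (1 - \<beta>)))
       \<and> ((\<lambda>n. coal_rate 1 n / ln (real n)) \<longlonglongrightarrow> 2)"
  using part1 part2 by blast

end
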